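(* Let $\varphi$ be a CNF formula with $m$ clauses. During the execution of Algorithm msu1 on $\varphi$, the total number of blocking variables created is $\mathcal{O}(m^2)$ in the worst case.
   Context: Algorithm msu1 (Fu and Malik). Input: a CNF formula $\varphi$ (a finite set of clauses). All clauses of $\varphi$ are tagged non-auxiliary. The working formula is initialised to $\varphi_W:=\varphi$. Each iteration calls a SAT oracle on $\varphi_W$. If $\varphi_W$ is unsatisfiable, the oracle returns an unsatisfiable core $\varphi_C\subseteq\varphi_W$, i.e. a subset of the clauses of $\varphi_W$ that is itself unsatisfiable. Then, for each non-auxiliary clause $\omega\in\varphi_C$, a fresh variable $b$ (a blocking variable) is created and $\omega$ is replaced in $\varphi_W$ by $\omega\vee b$. The new clause is tagged non-auxiliary, and $b$ is associated with the original clause of $\varphi$ from which $\omega$ descends. Let $BV$ be the set of blocking variables created in this iteration. A CNF encoding of $\sum_{b\in BV} b=1$ is added to $\varphi_W$; its clauses are tagged auxiliary. An assignment to $BV$ extends to a satisfying assignment of the encoding iff exactly one variable of $BV$ is true. If $\varphi_W$ is satisfiable, the algorithm stops and returns $|\varphi|-\nu$, where $\nu$ is the number of blocking variables assigned value 1. *)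

theory Defs
  imports Main
begin

type_synonym lit = "nat \<times> bool"
type_synonym clause = "lit set"
type_synonym cnf = "clause set"

definition sat :: "(nat \<Rightarrow> bool) \<Rightarrow> cnf \<Rightarrow> bool" where
  "sat \<sigma> F \<longleftrightarrow> (\<forall>cl\<in>F. \<exists>(x, p)\<in>cl. \<sigma> x = p)"

definition satisfiable :: "cnf \<Rightarrow> bool" where
  "satisfiable F \<longleftrightarrow> (\<exists>\<sigma>. sat \<sigma> F)"

definition vars :: "cnf \<Rightarrow> nat set" where
  "vars F = fst ` \<Union> F"

definition exactly_one_encoding :: "cnf \<Rightarrow> nat set \<Rightarrow> bool" where
  "exactly_one_encoding E BV \<longleftrightarrow> finite E \<and> (\<forall>cl\<in>E. finite cl) \<and>
     (\<forall>\<sigma>. (\<exists>\<tau>. (\<forall>x\<in>BV. \<tau> x = \<sigma> x) \<and> sat \<tau> E) \<longleftrightarrow> card {x\<in>BV. \<sigma> x} = 1)"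

text \<open>A state (W, A, n) consists of:
  W c = the current non-auxiliary working clause descending from original clause c,
  A = the set of auxiliary clauses, n = total number of blocking variables created so far.
  The working formula is  W ` phi \<union> A.  In a step the oracle returns an unsatisfiable core,
  whose non-auxiliary part is {W c | c \<in> C} and auxiliary part is Ca; each W c (c \<in> C)
  gets a fresh blocking variable b c; a cardinality encoding E of sum = 1 over the new
  blocking variables (with any extra variables fresh) is added.\<close>
inductive msu1_reach :: "cnf \<Rightarrow> (clause \<Rightarrow> clause) \<times> cnf \<times> nat \<Rightarrow> bool" for \<phi> :: cnf where
  init: "msu1_reach \<phi> (id, {}, 0)"
| step: "\<lbrakk> msu1_reach \<phi> (W, A, n);
           \<not> satisfiable (W ` \<phi> \<union> A);
           C \<subseteq> \<phi>; Ca \<subseteq> A;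
           \<not> satisfiable (W ` C \<union> Ca);
           inj_on b C;
           b ` C \<inter> vars (W ` \<phi> \<union> A) = {};
           exactly_one_encoding E (b ` C);
           vars E \<inter> vars (W ` \<phi> \<union> A) = {} \<rbrakk>
   \<Longrightarrow> msu1_reach \<phi> ((\<lambda>c. if c \<in> C then insert (b c, True) (W c) else W c),
                      A \<union> E, n + card C)"

end

theory Submission
  imports Defs
begin

lemma l1: "cl \<in> F \<Longrightarrow> (x, p) \<in> cl \<Longrightarrow> x \<in> vars F"
  unfolding vars_def by (rule image_eqI[of _ fst "(x,p)"]) auto
lemma sat_agree:
  assumes "\<forall>x\<in>vars F. \<sigma> x = \<tau> x"
  shows "sat \<sigma> F = sat \<tau> F"
proof -
  have h: "\<sigma> x = \<tau> x" if "cl \<in> F" "(x, p) \<in> cl" for cl x p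
    using assms l1[OF that] by blast
  show ?thesis unfolding sat_def
  proof (intro iffI ballI)
    fix cl assume a: "\<forall>cl\<in>F. \<exists>(x, p)\<in>cl. \<sigma> x = p" and cl: "cl \<in> F"
    then have "\<exists>(x, p)\<in>cl. \<sigma> x = p" by (rule bspec)
    then obtain y where y: "y \<in> cl" "\<sigma> (fst y) = snd y" by (auto simp: case_prod_beta)
    have "\<tau> (fst y) = snd y" using h[OF cl, of "fst y" "snd y"] y by simp
    then show "\<exists>(x, p)\<in>cl. \<tau> x = p" using y(1) by (auto simp: case_prod_beta)
  next
    fix cl assume a: "\<forall>cl\<in>F. \<exists>(x, p)\<in>cl. \<tau> x = p" and cl: "cl \<in> F"
    then have "\<exists>(x, p)\<in>cl. \<tau> x = p" by (rule bspec)
    then obtain y where y: "y \<in> cl" "\<tau> (fst y) = snd y" by (auto simp: case_prod_beta)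
    have "\<sigma> (fst y) = snd y" using h[OF cl, of "fst y" "snd y"] y by simp
    then show "\<exists>(x, p)\<in>cl. \<sigma> x = p" using y(1) by (auto simp: case_prod_beta)
  qed
qed

lemma sat_union: "sat \<tau> (F \<union> G) = (sat \<tau> F \<and> sat \<tau> G)"
  unfolding sat_def by blast

lemma sat_image: "sat \<tau> (W ` C) = (\<forall>c\<in>C. sat \<tau> {W c})"
  unfolding sat_def by auto

lemma sat_single: "sat \<sigma> {cl} = (\<exists>y\<in>cl. \<sigma> (fst y) = snd y)"
  unfolding sat_def by (auto simp: case_prod_beta)

lemma sat_subset: "F \<subseteq> G \<Longrightarrow> sat \<sigma> G \<Longrightarrow> sat \<sigma> F"
  unfolding sat_def by (meson subsetD)

lemma vars_mono: "F \<subseteq> G \<Longrightarrow> vars F \<subseteq> vars G"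
  unfolding vars_def by auto

lemma inv0:
  assumes "msu1_reach \<phi> s" "finite \<phi>"
  shows "case s of (W, A, n) \<Rightarrow> \<exists>k \<tau>. sat \<tau> A \<and> card {c\<in>\<phi>. \<not> sat \<tau> {W c}} + k \<le> card \<phi> \<and> n \<le> k * card \<phi>"
  using assms
proof (induction s rule: msu1_reach.induct)
  case init
  show ?case
    unfolding prod.case
  proof (intro exI conjI)
    show "sat (\<lambda>_. True) {}" by (simp add: sat_def)
    have "card {c\<in>\<phi>. \<not> sat (\<lambda>_. True) {id c}} \<le> card \<phi>"
      using init by (intro card_mono) auto
    then show "card {c\<in>\<phi>. \<not> sat (\<lambda>_. True) {id c}} + 0 \<le> card \<phi>" by simp
    show "0 \<le> 0 * card \<phi>" by simp
  qed
next
  case (step W A n C Ca b E)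
  from step.IH[OF step.prems] obtain k \<tau> where
    tA: "sat \<tau> A" and cnt: "card {c\<in>\<phi>. \<not> sat \<tau> {W c}} + k \<le> card \<phi>"
    and nk: "n \<le> k * card \<phi>" by blast
  have "sat \<tau> Ca" using sat_subset[OF step.hyps(4) tA] .
  have "\<not> sat \<tau> (W ` C \<union> Ca)" using step.hyps(5) unfolding satisfiable_def by blast
  with \<open>sat \<tau> Ca\<close> have "\<not> sat \<tau> (W ` C)" unfolding sat_union by blast
  then obtain c0 where c0: "c0 \<in> C" "\<not> sat \<tau> {W c0}" unfolding sat_image by blast
  have "card {x\<in>b ` C. x = b c0} = 1"
  proof -
    have "{x\<in>b ` C. x = b c0} = {b c0}" using c0 by auto
    then show ?thesis by simp
  qed
  moreover have "\<forall>\<sigma>. (\<exists>\<tau>. (\<forall>x\<in>b ` C. \<tau> x = \<sigma> x) \<and> sat \<tau> E) \<longleftrightarrow> card {x\<in>b ` C. \<sigma> x} = 1"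
    using step.hyps(8) unfolding exactly_one_encoding_def by (elim conjE)
  ultimately have "\<exists>\<tau>. (\<forall>x\<in>b ` C. \<tau> x = (x = b c0)) \<and> sat \<tau> E"
    by (elim allE[of _ "\<lambda>x. x = b c0"]) simp
  then obtain \<tau>' where t': "\<forall>x\<in>b ` C. \<tau>' x = (x = b c0)" "sat \<tau>' E"
    by (elim exE conjE)
  define \<sigma> where "\<sigma> x = (if x \<in> b ` C then x = b c0 else if x \<in> vars E then \<tau>' x else \<tau> x)" for x
  let ?V = "vars (W ` \<phi> \<union> A)"
  have agree: "\<forall>x\<in>?V. \<sigma> x = \<tau> x"
    unfolding \<sigma>_def
  proof
    fix x assume "x \<in> ?V"
    then have "x \<notin> b ` C" "x \<notin> vars E" using step.hyps(7,9) by blast+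
    then show "(if x \<in> b ` C then x = b c0 else if x \<in> vars E then \<tau>' x else \<tau> x) = \<tau> x" by simp
  qed
  have "sat \<sigma> A"
    using tA sat_agree[of A \<sigma> \<tau>] agree vars_mono[of A "W ` \<phi> \<union> A"] by blast
  moreover have "sat \<sigma> E"
    proof -
    have "\<forall>x\<in>vars E. \<sigma> x = \<tau>' x" unfolding \<sigma>_def using t'(1) by auto
    then show ?thesis using t'(2) sat_agree[of E \<sigma> \<tau>'] by blast
  qed
  ultimately have sA: "sat \<sigma> (A \<union> E)" by (simp add: sat_union)
  define W' where "W' = (\<lambda>c. if c \<in> C then insert (b c, True) (W c) else W c)"
  have sub: "{c\<in>\<phi>. \<not> sat \<sigma> {W' c}} \<subseteq> {c\<in>\<phi>. \<not> sat \<tau> {W c}} - {c0}"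
  proof
    fix c assume c: "c \<in> {c\<in>\<phi>. \<not> sat \<sigma> {W' c}}"
    have "c \<noteq> c0"
    proof
      assume "c = c0"
      have "\<sigma> (b c0) = True" using c0(1) unfolding \<sigma>_def by simp
      moreover have "(b c0, True) \<in> W' c0" using c0(1) unfolding W'_def by simp
      ultimately have "sat \<sigma> {W' c}" unfolding sat_single \<open>c = c0\<close> by force
      with c show False by blast
    qed
    moreover have "\<not> sat \<tau> {W c}"
    proof
      assume "sat \<tau> {W c}"
      moreover have "vars {W c} \<subseteq> ?V" using c by (intro vars_mono) auto
      ultimately have "sat \<sigma> {W c}" using sat_agree[of "{W c}" \<sigma> \<tau>] agree by blast
      moreover have "W c \<subseteq> W' c" unfolding W'_def by auto
      ultimately have "sat \<sigma> {W' c}" unfolding sat_single by blast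
      with c show False by blast
    qed
    ultimately show "c \<in> {c\<in>\<phi>. \<not> sat \<tau> {W c}} - {c0}" using c by blast
  qed
  have c0in: "c0 \<in> {c\<in>\<phi>. \<not> sat \<tau> {W c}}" using c0 step.hyps(3) by blast
  have fin: "finite {c\<in>\<phi>. \<not> sat \<tau> {W c}}" using step.prems by (rule finite_subset[rotated]) blast
  have "card {c\<in>\<phi>. \<not> sat \<sigma> {W' c}} \<le> card ({c\<in>\<phi>. \<not> sat \<tau> {W c}} - {c0})"
    by (rule card_mono[OF finite_Diff[OF fin] sub])
  also have "\<dots> = card {c\<in>\<phi>. \<not> sat \<tau> {W c}} - 1" using c0in fin by simp
  finally have le: "card {c\<in>\<phi>. \<not> sat \<sigma> {W' c}} \<le> card {c\<in>\<phi>. \<not> sat \<tau> {W c}} - 1" .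
  have cnt': "card {c\<in>\<phi>. \<not> sat \<sigma> {W' c}} + Suc k \<le> card \<phi>"
  proof -
    have "card {c\<in>\<phi>. \<not> sat \<tau> {W c}} > 0" using c0in fin card_gt_0_iff by blast
    then show ?thesis using cnt le by linarith
  qed
  have "card C \<le> card \<phi>" using step.hyps(3) step.prems by (simp add: card_mono)
  then have "n + card C \<le> Suc k * card \<phi>" using nk by simp
  with sA cnt' have final: "sat \<sigma> (A \<union> E) \<and> card {c\<in>\<phi>. \<not> sat \<sigma> {W' c}} + Suc k \<le> card \<phi> \<and> n + card C \<le> Suc k * card \<phi>"
    by (intro conjI)
  show ?case
    unfolding prod.case
    apply (rule exI[of _ "Suc k"], rule exI[of _ \<sigma>])
    using final unfolding W'_def by assumption
qed

lemma inv:
  assumes "msu1_reach \<phi> (W, A, n)" "finite \<phi>"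
  shows "\<exists>k \<tau>. sat \<tau> A \<and> card {c\<in>\<phi>. \<not> sat \<tau> {W c}} + k \<le> card \<phi> \<and> n \<le> k * card \<phi>"
  using inv0[OF assms] by (simp only: prod.case)

theorem proposition5:
  shows "\<exists>K::nat. \<forall>\<phi> W A n. finite \<phi> \<longrightarrow> (\<forall>cl\<in>\<phi>. finite cl) \<longrightarrow>
           msu1_reach \<phi> (W, A, n) \<longrightarrow> n \<le> K * (card \<phi>)\<^sup>2"
proof (rule exI[of _ 1], intro allI impI)
  fix \<phi> W A n assume fin: "finite \<phi>" and r: "msu1_reach \<phi> (W, A, n)"
  obtain k \<tau> where h: "card {c\<in>\<phi>. \<not> sat \<tau> {W c}} + k \<le> card \<phi>" and hn: "n \<le> k * card \<phi>"
    using inv[OF r fin] by (elim exE conjE)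
  from h have "k \<le> card \<phi>" by (rule add_leD2)
  then have "k * card \<phi> \<le> card \<phi> * card \<phi>" by (rule mult_le_mono1)
  then have "n \<le> card \<phi> * card \<phi>" using hn by (rule le_trans[rotated])
  then show "n \<le> 1 * (card \<phi>)\<^sup>2" by (simp add: power2_eq_square)
qed

end
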